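(* Suppose Assumptions A1 and A4 (stated in the context) hold, let $w^*,w_k\in\mathbb{R}^d$ and $\gamma>0$, and let $H_k^{(r)}$ be the exact rank-$r$ truncated spectral decomposition of $\nabla^2F_{S_k}(w_k)$. Then $$\mathbb{E}_k\big\|\big([H_k^{(r)}+\gamma I]-\nabla^2\overline{F}(w_k)\big)(w_k-w^* )\big\|\le\Big[\overline{|\lambda_{r+1}^{(k)}|}+\gamma+\frac{\sigma}{\sqrt{N_{S_k}}}\Big]\|w_k-w^*\|,$$ where $\overline{|\lambda_{r+1}^{(k)}|}=\mathbb{E}_k[|\lambda_{r+1}^{(k)}|]$.
   Context: Data pairs $(x,y)$ are distributed according to $\nu$; $\ell(w;x,y)$ is a smooth loss, $w\in\mathbb{R}^d$, $F(w)=\int\ell(w;x,y)\,d\nu$. For $(x_i,y_i)\sim\nu$, $F_i(w)=\ell(w;x_i,y_i)$; for a finite sample $S$, $N_S=|S|$ and $F_S=\frac1{N_S}\sum_{i\in S}F_i$. With $\gamma>0$, $\overline{F}(w)=F(w)+\frac\gamma2\|w\|^2$. At iteration $k$ a Hessian sample $S_k$ is drawn at random; $\mathbb{E}_k$ is the conditional expectation at iteration $k$ over all possible sample batches. $\lambda_1^{(k)},\dots,\lambda_d^{(k)}$ are the eigenvalues of $\nabla^2F_{S_k}(w_k)$ ordered by nonincreasing absolute value with orthonormal eigenvectors $u_i^{(k)}$, and $H_k^{(r)}=\sum_{i=1}^r\lambda_i^{(k)}u_i^{(k)}u_i^{(k)T}$. Norms are Euclidean/spectral; $A\preceq B$ means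 $B-A$ is positive semidefinite. (A1) $F$ is twice continuously differentiable and for every sample $S$ with $|S|=N_S$ there is a positive constant $L_{N_S}<L$ with $\nabla^2F_S(w)\preceq L_{N_S}I$; moreover the first $r$ eigenvalues of $\nabla^2F_S(w)$ evaluated along the path of iterates starting at $w_0$ are positive. (A4) There is $\sigma$ with $\|\mathbb{E}[(\nabla^2F_i(w)-\nabla^2F(w))^2]\|\le\sigma^2$ for all $w$. *)

theory Defs
  imports "HOL-Probability.Probability"
begin

definition hessian_at :: "(real^'n \<Rightarrow> real) \<Rightarrow> real^'n \<Rightarrow> real^'n^'n \<Rightarrow> bool" where
  "hessian_at f w H \<longleftrightarrow>
     (\<exists>g. (\<forall>u. (f has_derivative (\<lambda>h. g u \<bullet> h)) (at u)) \<and>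
          (g has_derivative (\<lambda>h. H *v h)) (at w))"

definition loewner_le :: "real^'n^'n \<Rightarrow> real^'n^'n \<Rightarrow> bool" where
  "loewner_le A B \<longleftrightarrow> (\<forall>x. 0 \<le> x \<bullet> ((B - A) *v x))"

definition spec_norm :: "real^'n^'n \<Rightarrow> real" where
  "spec_norm A = onorm (\<lambda>x. A *v x)"

definition outer :: "real^'n \<Rightarrow> real^'n^'n" where
  "outer u = (\<chi> a b. u $ a * u $ b)"

text \<open>lam 0, ..., lam (d-1) are the eigenvalues of A (d = CARD('n)), ordered by
  nonincreasing absolute value, with orthonormal eigenvectors u 0, ..., u (d-1).
  (Index i here corresponds to index i+1 in the paper.)\<close>
definition ordered_eigendecomp :: "real^'n^'n \<Rightarrow> (nat \<Rightarrow> real) \<Rightarrow> (nat \<Rightarrow> real^'n) \<Rightarrow> bool" where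
  "ordered_eigendecomp A lam u \<longleftrightarrow>
     (\<forall>i<CARD('n). \<forall>j<CARD('n). u i \<bullet> u j = (if i = j then 1 else 0)) \<and>
     (\<forall>i<CARD('n). A *v u i = lam i *\<^sub>R u i) \<and>
     (\<forall>i j. i \<le> j \<and> j < CARD('n) \<longrightarrow> \<bar>lam j\<bar> \<le> \<bar>lam i\<bar>)"

definition trunc_spec :: "nat \<Rightarrow> (nat \<Rightarrow> real) \<Rightarrow> (nat \<Rightarrow> real^'n) \<Rightarrow> real^'n^'n" where
  "trunc_spec r lam u = (\<Sum>i<r. lam i *\<^sub>R outer (u i))"

definition sample_hess :: "('z \<Rightarrow> real^'n \<Rightarrow> real^'n^'n) \<Rightarrow> nat \<Rightarrow> (nat \<Rightarrow> 'z) \<Rightarrow> real^'n \<Rightarrow> real^'n^'n" where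
  "sample_hess hess n s w = (1 / real n) *\<^sub>R (\<Sum>i<n. hess (s i) w)"

end

theory Submission
  imports Defs
begin


lemma outer_mult: "outer u *v x = (u \<bullet> x) *\<^sub>R u" for u :: "real^'n"
  by (simp add: vec_eq_iff outer_def matrix_vector_mult_def inner_vec_def sum_distrib_left
      sum_distrib_right mult.commute mult.left_commute)

lemma sum_mat_mult: "(sum f I) *v x = (\<Sum>i\<in>I. f i *v x)" for f :: "'i \<Rightarrow> real^'n^'m"
proof (induction I rule: infinite_finite_induct)
  case (insert a F) then show ?case by (simp add: matrix_vector_mult_add_rdistrib)
qed (auto simp: vec_eq_iff matrix_vector_mult_def)

lemma scaleR_mat_mult: "(c *\<^sub>R M) *v x = c *\<^sub>R (M *v x)" for M :: "real^'n^'m"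
  by (simp add: vec_eq_iff matrix_vector_mult_def sum_distrib_left mult.assoc)

lemma trunc_mult: "trunc_spec r lam u *v x = (\<Sum>i<r. (lam i * (u i \<bullet> x)) *\<^sub>R u i)"
  unfolding trunc_spec_def sum_mat_mult
  by (simp add: outer_mult scaleR_mat_mult)

definition orthon :: "(nat \<Rightarrow> real^'n) \<Rightarrow> bool" where
  "orthon u \<longleftrightarrow> (\<forall>i<CARD('n). \<forall>j<CARD('n). u i \<bullet> u j = (if i = j then 1 else 0))"

lemma parseval:
  fixes u :: "nat \<Rightarrow> real^'n"
  assumes "orthon u" "I \<subseteq> {..<CARD('n)}"
  shows "(\<Sum>i\<in>I. c i *\<^sub>R u i) \<bullet> (\<Sum>i\<in>I. c i *\<^sub>R u i) = (\<Sum>i\<in>I. (c i)\<^sup>2)"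
proof -
  have fin: "finite I" using assms(2) finite_subset by blast
  have "(\<Sum>i\<in>I. c i *\<^sub>R u i) \<bullet> (\<Sum>i\<in>I. c i *\<^sub>R u i) = (\<Sum>i\<in>I. \<Sum>j\<in>I. c i * (c j * (u j \<bullet> u i)))"
    by (simp add: inner_sum_left inner_sum_right sum_distrib_left)
  also have "\<dots> = (\<Sum>i\<in>I. \<Sum>j\<in>I. if i = j then c i * c j else 0)"
    by (intro sum.cong refl) (use assms in \<open>auto simp: orthon_def subset_iff\<close>)
  also have "\<dots> = (\<Sum>i\<in>I. (c i)\<^sup>2)"
    using fin by (simp add: power2_eq_square)
  finally show ?thesis .
qed

lemma on_expand:
  fixes u :: "nat \<Rightarrow> real^'n"
  assumes on: "orthon u"
  shows "x = (\<Sum>i<CARD('n). (u i \<bullet> x) *\<^sub>R u i)"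
proof -
  let ?d = "CARD('n)"
  let ?B = "u ` {..<?d}"
  have inj: "inj_on u {..<?d}"
  proof (rule inj_onI)
    fix i j assume "i \<in> {..<?d}" "j \<in> {..<?d}" "u i = u j"
    then show "i = j" using on unfolding orthon_def by (metis lessThan_iff one_neq_zero)
  qed
  have po: "pairwise orthogonal ?B"
    using on unfolding orthon_def pairwise_def orthogonal_def by auto
  have n0: "0 \<notin> ?B"
  proof
    assume "0 \<in> ?B"
    then obtain j where "j < ?d" "u j = 0" by auto
    then show False using on unfolding orthon_def by (metis inner_zero_left zero_neq_one)
  qed
  have ind: "independent ?B" by (rule pairwise_orthogonal_independent[OF po n0])
  have card: "card ?B = ?d" using card_image[OF inj] by simp
  have sp: "UNIV \<subseteq> span ?B"
    by (rule card_ge_dim_independent) (use ind card in auto)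
  define w where "w = x - (\<Sum>i<?d. (u i \<bullet> x) *\<^sub>R u i)"
  have orth: "orthogonal w y" if "y \<in> ?B" for y
  proof -
    obtain j where j: "j < ?d" "y = u j" using \<open>y \<in> ?B\<close> by auto
    have "(\<Sum>i<?d. (u i \<bullet> x) *\<^sub>R u i) \<bullet> u j = (\<Sum>i<?d. (u i \<bullet> x) * (u i \<bullet> u j))"
      by (simp add: inner_sum_left)
    also have "\<dots> = (\<Sum>i<?d. if i = j then u j \<bullet> x else 0)"
      using on j unfolding orthon_def by (intro sum.cong refl) auto
    also have "\<dots> = x \<bullet> u j" using j by (simp add: inner_commute)
    finally show ?thesis unfolding orthogonal_def w_def j
      by (simp add: inner_diff_left)
  qed
  have "orthogonal w w" by (rule orthogonal_to_span[OF _ orth]) (use sp in auto)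
  then have "w = 0" by (simp add: orthogonal_def)
  then show ?thesis unfolding w_def by simp
qed

lemma norm_onsum:
  fixes u :: "nat \<Rightarrow> real^'n"
  assumes "orthon u" "I \<subseteq> {..<CARD('n)}"
  shows "norm (\<Sum>i\<in>I. c i *\<^sub>R u i) = sqrt (\<Sum>i\<in>I. (c i)\<^sup>2)"
  using parseval[OF assms] by (simp add: norm_eq_sqrt_inner)



lemma spec_norm_add: "spec_norm (X + Y) \<le> spec_norm X + spec_norm Y" for X Y :: "real^'n^'n"
  unfolding spec_norm_def matrix_vector_mult_add_rdistrib
  by (rule onorm_triangle) (auto intro: matrix_vector_mul_bounded_linear)

lemma spec_norm_bound: "norm (X *v x) \<le> spec_norm X * norm x" for X :: "real^'n^'n"
  unfolding spec_norm_def using onorm[OF matrix_vector_mul_bounded_linear] by blast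

lemma spec_norm_nonneg: "0 \<le> spec_norm X" for X :: "real^'n^'n"
  unfolding spec_norm_def using onorm_pos_le[OF matrix_vector_mul_bounded_linear] by blast

lemma spec_norm_le_norm: "spec_norm X \<le> real CARD('n) * real CARD('n) * norm X" for X :: "real^'n^'n"
  unfolding spec_norm_def
  by (rule onorm_le_matrix_component) (meson component_le_norm_cart Finite_Cartesian_Product.norm_nth_le order_trans)

lemma eig_orthon: "ordered_eigendecomp A lam u \<Longrightarrow> orthon u" for A :: "real^'n^'n"
  unfolding ordered_eigendecomp_def orthon_def by blast

lemma eig_mult:
  fixes A :: "real^'n^'n"
  assumes "ordered_eigendecomp A lam u"
  shows "A *v x = (\<Sum>i<CARD('n). (lam i * (u i \<bullet> x)) *\<^sub>R u i)"
proof -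
  have "A *v x = A *v (\<Sum>i<CARD('n). (u i \<bullet> x) *\<^sub>R u i)"
    using on_expand[OF eig_orthon[OF assms], of x] by (simp only: eq_commute)
  also have "\<dots> = (\<Sum>i<CARD('n). (lam i * (u i \<bullet> x)) *\<^sub>R u i)"
    using assms unfolding ordered_eigendecomp_def
    by (simp add: vec.sum matrix_vector_mult_scaleR mult.commute)
  finally show ?thesis .
qed

lemma eig_symX:
  fixes A :: "real^'n^'n"
  assumes "ordered_eigendecomp A lam u"
  shows "x \<bullet> (A *v y) = y \<bullet> (A *v x)"
proof -
  have "x \<bullet> (A *v y) = (\<Sum>i<CARD('n). lam i * ((u i \<bullet> y) * (u i \<bullet> x)))"
    unfolding eig_mult[OF assms] inner_sum_right by (simp add: inner_commute[of x] mult.assoc)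
  also have "\<dots> = (\<Sum>i<CARD('n). lam i * ((u i \<bullet> x) * (u i \<bullet> y)))"
    by (simp add: mult.commute)
  also have "\<dots> = y \<bullet> (A *v x)"
    unfolding eig_mult[OF assms] inner_sum_right by (simp add: inner_commute[of y] mult.assoc)
  finally show ?thesis .
qed

lemma norm_sq_expand:
  fixes x :: "real^'n"
  assumes "orthon u"
  shows "(norm x)\<^sup>2 = (\<Sum>i<CARD('n). (u i \<bullet> x)\<^sup>2)"
proof -
  have "(norm x)\<^sup>2 = x \<bullet> x" by (simp add: power2_norm_eq_inner)
  also have "\<dots> = (\<Sum>i<CARD('n). (u i \<bullet> x) *\<^sub>R u i) \<bullet> (\<Sum>i<CARD('n). (u i \<bullet> x) *\<^sub>R u i)"
    using on_expand[OF assms, of x] by (simp only: eq_commute)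
  also have "\<dots> = (\<Sum>i<CARD('n). (u i \<bullet> x)\<^sup>2)"
    by (rule parseval[OF assms]) simp
  finally show ?thesis .
qed

lemma trunc_err:
  fixes A :: "real^'n^'n"
  assumes eig: "ordered_eigendecomp A lam u" and r: "r < CARD('n)"
  shows "norm ((trunc_spec r lam u - A) *v x) \<le> \<bar>lam r\<bar> * norm x"
proof -
  let ?d = "CARD('n)"
  let ?I = "{..<?d} - {..<r}"
  have on: "orthon u" by (rule eig_orthon[OF eig])
  have split: "(\<Sum>i<?d. (lam i * (u i \<bullet> x)) *\<^sub>R u i) =
      (\<Sum>i\<in>?I. (lam i * (u i \<bullet> x)) *\<^sub>R u i) + (\<Sum>i<r. (lam i * (u i \<bullet> x)) *\<^sub>R u i)"
    using r by (intro sum.subset_diff) auto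
  have eq: "(trunc_spec r lam u - A) *v x = - (\<Sum>i\<in>?I. (lam i * (u i \<bullet> x)) *\<^sub>R u i)"
    unfolding matrix_vector_mult_diff_rdistrib trunc_mult eig_mult[OF eig] split by simp
  have "norm ((trunc_spec r lam u - A) *v x) = sqrt (\<Sum>i\<in>?I. (lam i * (u i \<bullet> x))\<^sup>2)"
  proof -
    have sub: "?I \<subseteq> {..<CARD('n)}" by blast
    show ?thesis unfolding eq norm_minus_cancel
      by (rule norm_onsum[OF on sub])
  qed
  also have "\<dots> \<le> sqrt (\<Sum>i<?d. (lam r)\<^sup>2 * (u i \<bullet> x)\<^sup>2)"
  proof (rule real_sqrt_le_mono)
    have "(\<Sum>i\<in>?I. (lam i * (u i \<bullet> x))\<^sup>2) \<le> (\<Sum>i\<in>?I. (lam r)\<^sup>2 * (u i \<bullet> x)\<^sup>2)"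
    proof (rule sum_mono)
      fix i assume "i \<in> ?I"
      then have "\<bar>lam i\<bar> \<le> \<bar>lam r\<bar>" using eig unfolding ordered_eigendecomp_def by auto
      then have "(lam i)\<^sup>2 \<le> (lam r)\<^sup>2" by (simp add: abs_le_square_iff)
      then show "(lam i * (u i \<bullet> x))\<^sup>2 \<le> (lam r)\<^sup>2 * (u i \<bullet> x)\<^sup>2"
        by (simp add: power_mult_distrib mult_right_mono)
    qed
    also have "\<dots> \<le> (\<Sum>i<?d. (lam r)\<^sup>2 * (u i \<bullet> x)\<^sup>2)"
      by (rule sum_mono2) auto
    finally show "(\<Sum>i\<in>?I. (lam i * (u i \<bullet> x))\<^sup>2) \<le> (\<Sum>i<?d. (lam r)\<^sup>2 * (u i \<bullet> x)\<^sup>2)" .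
  qed
  also have "\<dots> = \<bar>lam r\<bar> * norm x"
    by (simp add: sum_distrib_left[symmetric] norm_sq_expand[OF on, symmetric] real_sqrt_mult)
  finally show ?thesis .
qed



lemma orthon_indep:
  fixes u :: "nat \<Rightarrow> real^'n"
  assumes on: "orthon u" and K: "K \<subseteq> {..<CARD('n)}"
  shows "independent (u ` K)" "inj_on u K"
proof -
  have po: "pairwise orthogonal (u ` K)"
    using on K unfolding orthon_def pairwise_def orthogonal_def by (auto simp: subset_iff)
  have n0: "0 \<notin> u ` K"
  proof
    assume "0 \<in> u ` K"
    then obtain j where "j \<in> K" "u j = 0" by auto
    then show False using on K unfolding orthon_def by (metis inner_zero_left zero_neq_one lessThan_iff subsetD)
  qed
  show "independent (u ` K)" by (rule pairwise_orthogonal_independent[OF po n0])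
  show "inj_on u K"
  proof (rule inj_onI)
    fix i j assume "i \<in> K" "j \<in> K" "u i = u j"
    then show "i = j" using on K unfolding orthon_def by (metis lessThan_iff subsetD one_neq_zero)
  qed
qed

lemma lowrank_bound:
  fixes A B :: "real^'n^'n"
  assumes eig: "ordered_eigendecomp A lam u" and r: "r < CARD('n)"
    and dB: "dim (range ((*v) B)) \<le> r"
  shows "\<bar>lam r\<bar> \<le> spec_norm (A - B)"
proof -
  let ?d = "CARD('n)"
  let ?S = "span (u ` {..r})"
  have on: "orthon u" by (rule eig_orthon[OF eig])
  have K: "{..r} \<subseteq> {..<?d}" using r by auto
  have dimS: "dim ?S = Suc r"
    using orthon_indep[OF on K] by (simp add: dim_eq_card_independent card_image)
  have ninj: "\<not> inj_on ((*v) B) ?S"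
  proof
    assume inj: "inj_on ((*v) B) ?S"
    have "dim ((*v) B ` ?S) = dim ?S"
      by (rule dim_image_eq) (use inj in \<open>auto simp: span_span\<close>)
    moreover have "dim ((*v) B ` ?S) \<le> dim (range ((*v) B))"
      by (rule dim_subset) auto
    ultimately show False using dimS dB by simp
  qed
  then obtain x y where xy: "x \<in> ?S" "y \<in> ?S" "x \<noteq> y" "B *v x = B *v y"
    unfolding inj_on_def by blast
  define z where "z = x - y"
  have zS: "z \<in> ?S" unfolding z_def by (rule span_diff[OF xy(1,2)])
  have z0: "z \<noteq> 0" using xy(3) unfolding z_def by simp
  have Bz: "B *v z = 0" using xy(4) unfolding z_def by (simp add: matrix_vector_mult_diff_distrib)
  have coef: "u i \<bullet> z = 0" if "r < i" "i < ?d" for i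
  proof -
    have "orthogonal (u i) z"
    proof (rule orthogonal_to_span[OF zS])
      fix y assume "y \<in> u ` {..r}"
      then obtain j where "j \<le> r" "y = u j" by auto
      then show "orthogonal (u i) y" using on that unfolding orthon_def orthogonal_def by auto
    qed
    then show ?thesis by (simp add: orthogonal_def)
  qed
  have nAz: "(norm (A *v z))\<^sup>2 = (\<Sum>i<?d. (lam i * (u i \<bullet> z))\<^sup>2)"
    unfolding eig_mult[OF eig] norm_onsum[OF on order_refl]
    by (simp add: sum_nonneg)
  have "(\<bar>lam r\<bar> * norm z)\<^sup>2 = (\<Sum>i<?d. (lam r)\<^sup>2 * (u i \<bullet> z)\<^sup>2)"
    by (simp add: power_mult_distrib norm_sq_expand[OF on] sum_distrib_left)
  also have "\<dots> \<le> (\<Sum>i<?d. (lam i * (u i \<bullet> z))\<^sup>2)"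
  proof (rule sum_mono)
    fix i assume i: "i \<in> {..<?d}"
    show "(lam r)\<^sup>2 * (u i \<bullet> z)\<^sup>2 \<le> (lam i * (u i \<bullet> z))\<^sup>2"
    proof (cases "i \<le> r")
      case True
      then have "\<bar>lam r\<bar> \<le> \<bar>lam i\<bar>" using eig r unfolding ordered_eigendecomp_def by auto
      then have "(lam r)\<^sup>2 \<le> (lam i)\<^sup>2" by (simp add: abs_le_square_iff)
      then show ?thesis by (simp add: power_mult_distrib mult_right_mono)
    next
      case False
      then show ?thesis using coef i by simp
    qed
  qed
  also have "\<dots> = (norm (A *v z))\<^sup>2" using nAz by simp
  finally have "\<bar>lam r\<bar> * norm z \<le> norm (A *v z)"
    by (rule power2_le_imp_le) simp
  also have "A *v z = (A - B) *v z" using Bz by (simp add: matrix_vector_mult_diff_rdistrib)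
  also have "norm \<dots> \<le> spec_norm (A - B) * norm z" by (rule spec_norm_bound)
  finally show ?thesis using z0 by simp
qed

lemma trunc_rank:
  fixes u :: "nat \<Rightarrow> real^'n"
  shows "dim (range ((*v) (trunc_spec r lam u))) \<le> r"
proof -
  have "range ((*v) (trunc_spec r lam u)) \<subseteq> span (u ` {..<r})"
  proof
    fix y assume "y \<in> range ((*v) (trunc_spec r lam u))"
    then obtain x where "y = trunc_spec r lam u *v x" by auto
    then show "y \<in> span (u ` {..<r})"
      unfolding trunc_mult by (simp only:) (intro span_sum span_scale span_base; auto)
  qed
  then have "dim (range ((*v) (trunc_spec r lam u))) \<le> card (u ` {..<r})"
    by (rule dim_le_card) simp
  also have "\<dots> \<le> r" using card_image_le[of "{..<r}" u] by simp
  finally show ?thesis .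
qed

definition lrdist :: "nat \<Rightarrow> real^'n^'n \<Rightarrow> real" where
  "lrdist r A = Inf ((\<lambda>B. spec_norm (A - B)) ` {B. dim (range ((*v) B)) \<le> r})"

lemma lrdist_bdd: "bdd_below ((\<lambda>B. spec_norm (A - B)) ` {B. dim (range ((*v) B)) \<le> r})"
  for A :: "real^'n^'n"
  by (rule bdd_belowI[of _ 0]) (auto simp: spec_norm_nonneg)

lemma lrdist_ne: "(\<lambda>B. spec_norm (A - B)) ` {B. dim (range ((*v) B)) \<le> r} \<noteq> {}"
  for A :: "real^'n^'n"
proof -
  have "dim (range ((*v) (0::real^'n^'n))) \<le> r"
    using trunc_rank[of 0 "\<lambda>_. 0" "\<lambda>_. 0::real^'n"] by (simp add: trunc_spec_def)
  then show ?thesis by blast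
qed

lemma lrdist_eig:
  fixes A :: "real^'n^'n"
  assumes eig: "ordered_eigendecomp A lam u" and r: "r < CARD('n)"
  shows "lrdist r A = \<bar>lam r\<bar>"
proof (rule antisym)
  have "spec_norm (A - trunc_spec r lam u) \<le> \<bar>lam r\<bar>"
    unfolding spec_norm_def
  proof (rule onorm_le)
    fix x
    have "norm ((A - trunc_spec r lam u) *v x) = norm ((trunc_spec r lam u - A) *v x)"
      by (simp add: matrix_vector_mult_diff_rdistrib norm_minus_commute)
    also have "\<dots> \<le> \<bar>lam r\<bar> * norm x" by (rule trunc_err[OF eig r])
    finally show "norm ((A - trunc_spec r lam u) *v x) \<le> \<bar>lam r\<bar> * norm x" .
  qed
  moreover have "lrdist r A \<le> spec_norm (A - trunc_spec r lam u)"
    unfolding lrdist_def by (rule cInf_lower[OF _ lrdist_bdd]) (use trunc_rank in blast)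
  ultimately show "lrdist r A \<le> \<bar>lam r\<bar>" by simp
  show "\<bar>lam r\<bar> \<le> lrdist r A"
    unfolding lrdist_def by (rule cInf_greatest[OF lrdist_ne]) (auto intro: lowrank_bound[OF eig r])
qed

lemma lrdist_lip:
  fixes A A' :: "real^'n^'n"
  shows "lrdist r A \<le> lrdist r A' + spec_norm (A - A')"
proof -
  have "lrdist r A - spec_norm (A - A') \<le> lrdist r A'"
    unfolding lrdist_def[of r A']
  proof (rule cInf_greatest[OF lrdist_ne])
    fix y assume "y \<in> (\<lambda>B. spec_norm (A' - B)) ` {B. dim (range ((*v) B)) \<le> r}"
    then obtain B where B: "dim (range ((*v) B)) \<le> r" "y = spec_norm (A' - B)" by auto
    have "lrdist r A \<le> spec_norm (A - B)"
      unfolding lrdist_def by (rule cInf_lower[OF _ lrdist_bdd]) (use B in blast)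
    also have "A - B = (A' - B) + (A - A')" by simp
    also have "spec_norm \<dots> \<le> spec_norm (A' - B) + spec_norm (A - A')" by (rule spec_norm_add)
    finally show "lrdist r A - spec_norm (A - A') \<le> y" using B by simp
  qed
  then show ?thesis by simp
qed

lemma lrdist_cont: "continuous_on UNIV (lrdist r :: real^'n^'n \<Rightarrow> real)"
proof (rule lipschitz_on_continuous_on)
  show "(real CARD('n) * real CARD('n))-lipschitz_on UNIV (lrdist r :: real^'n^'n \<Rightarrow> real)"
    unfolding lipschitz_on_def
  proof (intro conjI ballI)
    fix A A' :: "real^'n^'n"
    have 1: "lrdist r A - lrdist r A' \<le> real CARD('n) * real CARD('n) * norm (A - A')"
      using lrdist_lip[of r A A'] spec_norm_le_norm[of "A - A'"] by simp
    have 2: "lrdist r A' - lrdist r A \<le> real CARD('n) * real CARD('n) * norm (A - A')"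
      using lrdist_lip[of r A' A] spec_norm_le_norm[of "A' - A"] by (simp add: norm_minus_commute)
    show "dist (lrdist r A) (lrdist r A') \<le> real CARD('n) * real CARD('n) * dist A A'"
      using 1 2 by (simp add: dist_real_def dist_norm abs_le_iff)
  qed simp
qed



lemma comp_int:
  fixes f :: "'z \<Rightarrow> 'b::{banach, second_countable_topology}" and N :: nat
  assumes "prob_space \<nu>" "i < N" "integrable \<nu> f"
  shows "integrable (PiM {..<N} (\<lambda>_. \<nu>)) (\<lambda>s. f (s i))"
    and "(\<integral>s. f (s i) \<partial>PiM {..<N} (\<lambda>_. \<nu>)) = (\<integral>z. f z \<partial>\<nu>)"
proof -
  have d: "distr (PiM {..<N} (\<lambda>_. \<nu>)) \<nu> (\<lambda>s. s i) = \<nu>"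
    by (rule distr_PiM_component) (use assms in auto)
  have m: "(\<lambda>s. s i) \<in> measurable (PiM {..<N} (\<lambda>_. \<nu>)) \<nu>"
    by (rule measurable_component_singleton) (use assms in auto)
  have fm: "f \<in> borel_measurable \<nu>" using assms(3) by auto
  show "integrable (PiM {..<N} (\<lambda>_. \<nu>)) (\<lambda>s. f (s i))"
    using integrable_distr_eq[OF m fm] d assms(3) by simp
  show "(\<integral>s. f (s i) \<partial>PiM {..<N} (\<lambda>_. \<nu>)) = (\<integral>z. f z \<partial>\<nu>)"
    using integral_distr[OF m fm] d by simp
qed

lemma coord_indep:
  fixes N :: nat
  assumes pr: "prob_space \<nu>" and N: "N \<ge> 1"
  shows "prob_space.indep_vars (PiM {..<N} (\<lambda>_. \<nu>)) (\<lambda>_. \<nu>) (\<lambda>k s. s k) {..<N}"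
proof -
  let ?M = "PiM {..<N} (\<lambda>_. \<nu>)"
  interpret P: prob_space ?M by (rule prob_space_PiM) (use pr in auto)
  have ne: "{..<N} \<noteq> {}" using N by (auto simp: lessThan_empty_iff)
  have rv: "(\<lambda>s. s k) \<in> measurable ?M \<nu>" if "k \<in> {..<N}" for k
    by (rule measurable_component_singleton) (use that in auto)
  have "distr ?M (PiM {..<N} (\<lambda>_. \<nu>)) (\<lambda>x. \<lambda>k\<in>{..<N}. x k) = distr ?M ?M (\<lambda>x. x)"
    by (rule distr_cong) (auto simp: space_PiM PiE_def extensional_def restrict_def fun_eq_iff)
  also have "\<dots> = ?M" by (rule distr_id)
  also have "\<dots> = PiM {..<N} (\<lambda>k. distr ?M \<nu> (\<lambda>x. x k))"
    by (rule PiM_cong) (auto intro!: distr_PiM_component[symmetric] pr)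
  finally show ?thesis
    by (subst P.indep_vars_iff_distr_eq_PiM'[OF ne rv]) auto
qed



lemma bl_comp: "bounded_linear (\<lambda>X::real^'n^'n. (X *v v) $ c)"
  unfolding linear_conv_bounded_linear[symmetric]
  by (rule linearI) (simp_all add: matrix_vector_mult_add_rdistrib scaleR_mat_mult)

lemma bl_quad: "bounded_linear (\<lambda>X::real^'n^'n. x \<bullet> (X *v y))"
  unfolding linear_conv_bounded_linear[symmetric]
  by (rule linearI) (simp_all add: matrix_vector_mult_add_rdistrib scaleR_mat_mult inner_add_right)

lemma bl_vec: "bounded_linear (\<lambda>X::real^'n^'n. X *v v)"
  unfolding linear_conv_bounded_linear[symmetric]
  by (rule linearI) (simp_all add: matrix_vector_mult_add_rdistrib scaleR_mat_mult)

lemma var_bound: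
  fixes \<nu> :: "'z measure" and D :: "'z \<Rightarrow> real^'n^'n" and v :: "real^'n" and N :: nat
  assumes pr: "prob_space \<nu>" and N: "N \<ge> 1"
    and Dint: "integrable \<nu> D"
    and D0: "(\<integral>z. D z \<partial>\<nu>) = 0"
    and Dsym: "\<And>z x y. z \<in> space \<nu> \<Longrightarrow> x \<bullet> (D z *v y) = y \<bullet> (D z *v x)"
    and DDint: "integrable \<nu> (\<lambda>z. D z ** D z)"
    and DDb: "spec_norm (\<integral>z. D z ** D z \<partial>\<nu>) \<le> \<sigma>\<^sup>2"
    and sig: "\<sigma> \<ge> 0"
  shows "(\<integral>s. norm ((1 / real N) *\<^sub>R (\<Sum>i<N. D (s i) *v v)) \<partial>PiM {..<N} (\<lambda>_. \<nu>))
           \<le> \<sigma> / sqrt (real N) * norm v"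
proof -
  let ?M = "PiM {..<N} (\<lambda>_. \<nu>)"
  interpret nu: prob_space \<nu> by (rule pr)
  interpret P: prob_space ?M by (rule prob_space_PiM) (use pr in auto)
  define g where "g c z = (D z *v v) $ c" for c z
  define Y where "Y i s = D (s i) *v v" for i :: nat and s :: "nat \<Rightarrow> 'z"
  have gint: "integrable \<nu> (g c)" for c
    unfolding g_def by (rule integrable_bounded_linear[OF bl_comp Dint])
  have g0: "(\<integral>z. g c z \<partial>\<nu>) = 0" for c
    unfolding g_def integral_bounded_linear[OF bl_comp Dint] D0 by simp
  have gm: "g c \<in> borel_measurable \<nu>" for c using gint[of c] by auto
  have Yint0: "integrable \<nu> (\<lambda>z. D z *v v)" by (rule integrable_bounded_linear[OF bl_vec Dint])
  have qeq: "(D z *v v) \<bullet> (D z *v v) = v \<bullet> ((D z ** D z) *v v)" if "z \<in> space \<nu>" for z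
    using Dsym[OF that, of v "D z *v v"] by (simp add: matrix_vector_mul_assoc)
  have qint: "integrable \<nu> (\<lambda>z. (D z *v v) \<bullet> (D z *v v))"
    using integrable_bounded_linear[OF bl_quad DDint, of v v]
    by (subst Bochner_Integration.integrable_cong[OF refl qeq]) auto
  have qbound: "(\<integral>z. (D z *v v) \<bullet> (D z *v v) \<partial>\<nu>) \<le> \<sigma>\<^sup>2 * (norm v)\<^sup>2"
  proof -
    have "(\<integral>z. (D z *v v) \<bullet> (D z *v v) \<partial>\<nu>) = (\<integral>z. v \<bullet> ((D z ** D z) *v v) \<partial>\<nu>)"
      by (rule Bochner_Integration.integral_cong[OF refl qeq])
    also have "\<dots> = v \<bullet> ((\<integral>z. D z ** D z \<partial>\<nu>) *v v)"
      by (rule integral_bounded_linear[OF bl_quad DDint])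
    also have "\<dots> \<le> norm v * norm ((\<integral>z. D z ** D z \<partial>\<nu>) *v v)"
      by (rule norm_cauchy_schwarz)
    also have "\<dots> \<le> norm v * (spec_norm (\<integral>z. D z ** D z \<partial>\<nu>) * norm v)"
      by (rule mult_left_mono[OF spec_norm_bound]) simp
    also have "\<dots> \<le> norm v * (\<sigma>\<^sup>2 * norm v)"
      by (rule mult_left_mono[OF mult_right_mono[OF DDb]]) simp_all
    finally show ?thesis by (simp add: power2_eq_square mult_ac)
  qed
  have Yint: "integrable ?M (Y i)" if "i < N" for i
    unfolding Y_def by (rule comp_int(1)[OF pr that Yint0])
  have diag_int: "integrable ?M (\<lambda>s. Y i s \<bullet> Y i s)" if "i < N" for i
    unfolding Y_def by (rule comp_int(1)[OF pr that qint])
  have diag: "(\<integral>s. Y i s \<bullet> Y i s \<partial>?M) \<le> \<sigma>\<^sup>2 * (norm v)\<^sup>2" if "i < N" for i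
    unfolding Y_def comp_int(2)[OF pr that qint] by (rule qbound)
  have ind: "P.indep_vars (\<lambda>_. \<nu>) (\<lambda>k s. s k) {..<N}" by (rule coord_indep[OF pr N])
  have cross_c: "integrable ?M (\<lambda>s. g c (s i) * g c (s j)) \<and> (\<integral>s. g c (s i) * g c (s j) \<partial>?M) = 0"
    if ij: "i < N" "j < N" "i \<noteq> j" for i j c
  proof -
    have ind2: "P.indep_vars (\<lambda>_. \<nu>) (\<lambda>k s. s k) {i, j}"
      by (rule P.indep_vars_subset[OF ind]) (use ij in auto)
    have ind3: "P.indep_vars (\<lambda>_. borel) (\<lambda>k s. g c (s k)) {i, j}"
      using P.indep_vars_compose2[OF ind2, of "\<lambda>_. g c" "\<lambda>_. borel"] gm by simp
    have int: "integrable ?M (\<lambda>s. g c (s k))" if "k \<in> {i, j}" for k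
      using that ij by (auto intro: comp_int(1)[OF pr _ gint])
    have e: "(\<lambda>s. \<Prod>k\<in>{i, j}. g c (s k)) = (\<lambda>s. g c (s i) * g c (s j))"
      using ij by simp
    have "integrable ?M (\<lambda>s. \<Prod>k\<in>{i, j}. g c (s k))"
      by (rule P.indep_vars_integrable[OF _ ind3 int]) auto
    moreover have "(\<integral>s. (\<Prod>k\<in>{i, j}. g c (s k)) \<partial>?M) = (\<Prod>k\<in>{i, j}. \<integral>s. g c (s k) \<partial>?M)"
      by (rule P.indep_vars_lebesgue_integral[OF _ ind3 int]) auto
    moreover have "(\<integral>s. g c (s i) \<partial>?M) = 0"
      using comp_int(2)[OF pr ij(1) gint] g0 by simp
    ultimately show ?thesis unfolding e using ij by simp
  qed
  have cross_int: "integrable ?M (\<lambda>s. Y i s \<bullet> Y j s)" and cross: "(\<integral>s. Y i s \<bullet> Y j s \<partial>?M) = 0"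
    if ij: "i < N" "j < N" "i \<noteq> j" for i j
  proof -
    have e: "Y i s \<bullet> Y j s = (\<Sum>c\<in>UNIV. g c (s i) * g c (s j))" for s
      unfolding Y_def g_def inner_vec_def by simp
    show "integrable ?M (\<lambda>s. Y i s \<bullet> Y j s)"
      unfolding e using cross_c[OF ij] by auto
    show "(\<integral>s. Y i s \<bullet> Y j s \<partial>?M) = 0"
      unfolding e using cross_c[OF ij] by (subst Bochner_Integration.integral_sum) auto
  qed
  have all_int: "integrable ?M (\<lambda>s. Y i s \<bullet> Y j s)" if "i < N" "j < N" for i j
    using that diag_int cross_int by (cases "i = j") auto
  have nsq: "(norm (\<Sum>i<N. Y i s))\<^sup>2 = (\<Sum>i<N. \<Sum>j<N. Y i s \<bullet> Y j s)" for s
    by (simp add: power2_norm_eq_inner inner_sum_left inner_sum_right) (rule sum.swap)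
  have sq_int: "integrable ?M (\<lambda>s. (norm (\<Sum>i<N. Y i s))\<^sup>2)"
    unfolding nsq using all_int by (auto intro!: Bochner_Integration.integrable_sum)
  have sq_bound: "(\<integral>s. (norm (\<Sum>i<N. Y i s))\<^sup>2 \<partial>?M) \<le> real N * (\<sigma>\<^sup>2 * (norm v)\<^sup>2)"
  proof -
    have "(\<integral>s. (norm (\<Sum>i<N. Y i s))\<^sup>2 \<partial>?M) = (\<Sum>i<N. \<Sum>j<N. \<integral>s. Y i s \<bullet> Y j s \<partial>?M)"
      unfolding nsq
    proof (subst Bochner_Integration.integral_sum)
      show "integrable ?M (\<lambda>s. \<Sum>j<N. Y i s \<bullet> Y j s)" if "i \<in> {..<N}" for i
        using all_int that by (auto intro!: Bochner_Integration.integrable_sum)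
      show "(\<Sum>i<N. \<integral>s. (\<Sum>j<N. Y i s \<bullet> Y j s) \<partial>?M) = (\<Sum>i<N. \<Sum>j<N. \<integral>s. Y i s \<bullet> Y j s \<partial>?M)"
        by (rule sum.cong[OF refl], rule Bochner_Integration.integral_sum) (use all_int in auto)
    qed
    also have "\<dots> = (\<Sum>i<N. \<integral>s. Y i s \<bullet> Y i s \<partial>?M)"
    proof (rule sum.cong[OF refl])
      fix i assume i: "i \<in> {..<N}"
      have "(\<Sum>j<N. \<integral>s. Y i s \<bullet> Y j s \<partial>?M) = (\<Sum>j<N. if j = i then \<integral>s. Y i s \<bullet> Y i s \<partial>?M else 0)"
        by (rule sum.cong[OF refl]) (use i cross in auto)
      also have "\<dots> = (\<integral>s. Y i s \<bullet> Y i s \<partial>?M)" using i by simp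
      finally show "(\<Sum>j<N. \<integral>s. Y i s \<bullet> Y j s \<partial>?M) = (\<integral>s. Y i s \<bullet> Y i s \<partial>?M)" .
    qed
    also have "\<dots> \<le> (\<Sum>i<N. \<sigma>\<^sup>2 * (norm v)\<^sup>2)"
      by (rule sum_mono) (use diag in auto)
    finally show ?thesis by simp
  qed
  have n_int: "integrable ?M (\<lambda>s. norm (\<Sum>i<N. Y i s))"
    using Yint by (auto intro!: integrable_norm Bochner_Integration.integrable_sum)
  have jensen: "(\<integral>s. norm (\<Sum>i<N. Y i s) \<partial>?M)\<^sup>2 \<le> (\<integral>s. (norm (\<Sum>i<N. Y i s))\<^sup>2 \<partial>?M)"
  proof -
    have "0 \<le> (\<integral>s. (norm (\<Sum>i<N. Y i s) - (\<integral>s. norm (\<Sum>i<N. Y i s) \<partial>?M))\<^sup>2 \<partial>?M)"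
      by (rule Bochner_Integration.integral_nonneg) simp
    also have "\<dots> = (\<integral>s. (norm (\<Sum>i<N. Y i s))\<^sup>2 \<partial>?M) - (\<integral>s. norm (\<Sum>i<N. Y i s) \<partial>?M)\<^sup>2"
      by (rule P.variance_eq[OF n_int sq_int])
    finally show ?thesis by simp
  qed
  have "(\<integral>s. norm (\<Sum>i<N. Y i s) \<partial>?M) \<le> sqrt (real N * (\<sigma>\<^sup>2 * (norm v)\<^sup>2))"
    using jensen sq_bound by (intro real_le_rsqrt) linarith
  also have "\<dots> = sqrt (real N) * (\<sigma> * norm v)"
    using sig by (simp add: real_sqrt_mult)
  finally have main: "(\<integral>s. norm (\<Sum>i<N. Y i s) \<partial>?M) \<le> sqrt (real N) * (\<sigma> * norm v)" .
  have "(\<integral>s. norm ((1 / real N) *\<^sub>R (\<Sum>i<N. D (s i) *v v)) \<partial>?M)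
        = (1 / real N) * (\<integral>s. norm (\<Sum>i<N. Y i s) \<partial>?M)"
    unfolding Y_def by simp
  also have "\<dots> \<le> (1 / real N) * (sqrt (real N) * (\<sigma> * norm v))"
    by (rule mult_left_mono[OF main]) simp
  also have "\<dots> = \<sigma> / sqrt (real N) * norm v"
  proof -
    define t where "t = sqrt (real N)"
    have t0: "t > 0" using N unfolding t_def by simp
    have tN: "real N = t * t" unfolding t_def by simp
    show ?thesis unfolding tN t_def[symmetric] using t0 by (simp add: field_simps)
  qed
  finally show ?thesis .
qed



lemma lrdist_nonneg: "0 \<le> lrdist r X"
  unfolding lrdist_def by (rule cInf_greatest[OF lrdist_ne]) (auto simp: spec_norm_nonneg)

lemma lrdist_le: "lrdist r X \<le> spec_norm X"
proof -
  have "lrdist r X \<le> spec_norm (X - 0)"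
    unfolding lrdist_def
  proof (rule cInf_lower[OF _ lrdist_bdd])
    have "dim (range ((*v) (0::real^'a^'a))) \<le> r"
      using trunc_rank[of 0 "\<lambda>_. 0" "\<lambda>_. 0::real^'a"] by (simp add: trunc_spec_def)
    then show "spec_norm (X - 0) \<in> (\<lambda>B. spec_norm (X - B)) ` {B. dim (range ((*v) B)) \<le> r}" by blast
  qed
  then show ?thesis by simp
qed

theorem lemmaA4:
  fixes \<nu> :: "'z measure"
    and loss :: "real^'n \<Rightarrow> 'z \<Rightarrow> real"
    and hess :: "'z \<Rightarrow> real^'n \<Rightarrow> real^'n^'n"
    and F :: "real^'n \<Rightarrow> real"
    and HF :: "real^'n \<Rightarrow> real^'n^'n"
    and L :: real and LN :: "nat \<Rightarrow> real" and \<sigma> \<gamma> :: real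
    and N r :: nat
    and wk wstar :: "real^'n"
    and lam :: "(nat \<Rightarrow> 'z) \<Rightarrow> nat \<Rightarrow> real"
    and U :: "(nat \<Rightarrow> 'z) \<Rightarrow> nat \<Rightarrow> real^'n"
  assumes prob: "prob_space \<nu>"
    and loss_int: "\<And>w. integrable \<nu> (\<lambda>z. loss w z)"
    and F_def: "\<And>w. F w = (\<integral>z. loss w z \<partial>\<nu>)"
    and hess_l: "\<And>z w. hessian_at (\<lambda>v. loss v z) w (hess z w)"
    and hess_F: "\<And>w. hessian_at F w (HF w)"
    and hess_F_cont: "continuous_on UNIV HF"
    and hess_int: "\<And>w. integrable \<nu> (\<lambda>z. hess z w)"
    and hess_interchange: "\<And>w. HF w = (\<integral>z. hess z w \<partial>\<nu>)"
    \<comment> \<open>(A1) upper bound on sample Hessians\<close>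
    and A1_bound: "\<And>n s w. n \<ge> 1 \<Longrightarrow> (\<forall>i<n. s i \<in> space \<nu>) \<Longrightarrow>
        LN n < L \<and> loewner_le (sample_hess hess n s w) (LN n *\<^sub>R mat 1)"
    \<comment> \<open>(A4) variance bound\<close>
    and A4_int: "\<And>w. integrable \<nu> (\<lambda>z. (hess z w - HF w) ** (hess z w - HF w))"
    and A4: "\<And>w. spec_norm (\<integral>z. (hess z w - HF w) ** (hess z w - HF w) \<partial>\<nu>) \<le> \<sigma>\<^sup>2"
    and sigma_nonneg: "0 \<le> \<sigma>"
    and gamma_pos: "\<gamma> > 0"
    and N_pos: "N \<ge> 1"
    and r_lt: "r < CARD('n)"
    \<comment> \<open>ordered eigendecomposition of the sample Hessian at w_k, for every sample\<close>
    and eig: "\<And>s. s \<in> space (PiM {..<N} (\<lambda>_. \<nu>)) \<Longrightarrow>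
        ordered_eigendecomp (sample_hess hess N s wk) (lam s) (U s)"
    \<comment> \<open>(A1) the first r eigenvalues at the iterate are positive\<close>
    and A1_pos: "\<And>s i. s \<in> space (PiM {..<N} (\<lambda>_. \<nu>)) \<Longrightarrow> i < r \<Longrightarrow> lam s i > 0"
  shows "(\<integral>s. norm (((trunc_spec r (lam s) (U s) + \<gamma> *\<^sub>R mat 1) - (HF wk + \<gamma> *\<^sub>R mat 1))
                       *v (wk - wstar)) \<partial>(PiM {..<N} (\<lambda>_. \<nu>)))
         \<le> ((\<integral>s. \<bar>lam s r\<bar> \<partial>(PiM {..<N} (\<lambda>_. \<nu>))) + \<gamma> + \<sigma> / sqrt (real N)) * norm (wk - wstar)"
proof -
  let ?M = "PiM {..<N} (\<lambda>_. \<nu>)"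
  let ?v = "wk - wstar"
  define H where "H = HF wk"
  define D where "D z = hess z wk - H" for z
  define A where "A s = sample_hess hess N s wk" for s
  interpret nu: prob_space \<nu> by (rule prob)
  interpret P: prob_space ?M by (rule prob_space_PiM) (use prob in auto)
  have Npos: "real N > 0" using N_pos by simp
  have hsym: "x \<bullet> (hess z wk *v y) = y \<bullet> (hess z wk *v x)" if z: "z \<in> space \<nu>" for z x y
  proof -
    define s where "s = (\<lambda>i. if i < N then z else undefined)"
    have sM: "s \<in> space ?M" using z by (auto simp: s_def space_PiM PiE_def extensional_def)
    have "(\<Sum>i<N. hess (s i) wk) = (\<Sum>i<N. hess z wk)" by (rule sum.cong) (auto simp: s_def)
    also have "\<dots> = real N *\<^sub>R hess z wk" by (simp only: sum_constant_scaleR card_lessThan)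
    finally have "sample_hess hess N s wk = hess z wk"
      unfolding sample_hess_def using Npos by simp
    then show ?thesis using eig_symX[OF eig[OF sM]] by simp
  qed
  have Hsym: "x \<bullet> (H *v y) = y \<bullet> (H *v x)" for x y
  proof -
    have "x \<bullet> (H *v y) = (\<integral>z. x \<bullet> (hess z wk *v y) \<partial>\<nu>)"
      unfolding H_def hess_interchange by (rule integral_bounded_linear[OF bl_quad hess_int, symmetric])
    also have "\<dots> = (\<integral>z. y \<bullet> (hess z wk *v x) \<partial>\<nu>)"
      by (rule Bochner_Integration.integral_cong[OF refl]) (rule hsym)
    also have "\<dots> = y \<bullet> (H *v x)"
      unfolding H_def hess_interchange by (rule integral_bounded_linear[OF bl_quad hess_int])
    finally show ?thesis .
  qed
  have Dsym: "x \<bullet> (D z *v y) = y \<bullet> (D z *v x)" if "z \<in> space \<nu>" for z x y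
    unfolding D_def matrix_vector_mult_diff_rdistrib inner_diff_right using hsym[OF that] Hsym by simp
  have Dint: "integrable \<nu> D"
    unfolding D_def[abs_def] by (intro Bochner_Integration.integrable_diff hess_int nu.integrable_const)
  have D0: "(\<integral>z. D z \<partial>\<nu>) = 0"
    unfolding D_def Bochner_Integration.integral_diff[OF hess_int nu.integrable_const]
    by (simp add: H_def hess_interchange nu.prob_space)
  have DDint: "integrable \<nu> (\<lambda>z. D z ** D z)" unfolding D_def H_def by (rule A4_int)
  have DDb: "spec_norm (\<integral>z. D z ** D z \<partial>\<nu>) \<le> \<sigma>\<^sup>2" unfolding D_def H_def by (rule A4)
  have VB: "(\<integral>s. norm ((1 / real N) *\<^sub>R (\<Sum>i<N. D (s i) *v ?v)) \<partial>?M) \<le> \<sigma> / sqrt (real N) * norm ?v"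
    by (rule var_bound[OF prob N_pos Dint D0 Dsym DDint DDb sigma_nonneg])
  have AHm: "A s - H = (1 / real N) *\<^sub>R (\<Sum>i<N. D (s i))" for s
  proof -
    have "(\<Sum>i<N. D (s i)) = (\<Sum>i<N. hess (s i) wk) - real N *\<^sub>R H"
      unfolding D_def sum_subtractf by (simp only: sum_constant_scaleR card_lessThan)
    then show ?thesis unfolding A_def sample_hess_def using Npos
      by (simp add: scaleR_diff_right)
  qed
  have AH: "(A s - H) *v ?v = (1 / real N) *\<^sub>R (\<Sum>i<N. D (s i) *v ?v)" for s
    unfolding AHm scaleR_mat_mult sum_mat_mult ..
  have second: "(\<integral>s. norm ((A s - H) *v ?v) \<partial>?M) \<le> \<sigma> / sqrt (real N) * norm ?v"
    unfolding AH by (rule VB)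
  have Aint: "integrable ?M A"
    unfolding A_def sample_hess_def
    by (intro integrable_scaleR_right Bochner_Integration.integrable_sum comp_int(1)[OF prob _ hess_int]) auto
  have second_int: "integrable ?M (\<lambda>s. norm ((A s - H) *v ?v))"
    by (intro integrable_norm integrable_bounded_linear[OF bl_vec] Bochner_Integration.integrable_diff Aint P.integrable_const)
  have Am: "A \<in> borel_measurable ?M" using Aint by auto
  have lam_eq: "\<bar>lam s r\<bar> = lrdist r (A s)" if "s \<in> space ?M" for s
    unfolding A_def using lrdist_eig[OF eig[OF that] r_lt] by simp
  have lr_int: "integrable ?M (\<lambda>s. lrdist r (A s))"
  proof (rule Bochner_Integration.integrable_bound)
    show "integrable ?M (\<lambda>s. real CARD('n) * real CARD('n) * norm (A s))"
      by (intro integrable_mult_right integrable_norm Aint)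
    show "(\<lambda>s. lrdist r (A s)) \<in> borel_measurable ?M"
      by (rule measurable_compose[OF Am borel_measurable_continuous_onI[OF lrdist_cont]])
    show "AE s in ?M. norm (lrdist r (A s)) \<le> norm (real CARD('n) * real CARD('n) * norm (A s))"
    proof (rule AE_I2)
      fix s
      have "0 \<le> lrdist r (A s)" by (rule lrdist_nonneg)
      moreover have "lrdist r (A s) \<le> real CARD('n) * real CARD('n) * norm (A s)"
        using lrdist_le[of r "A s"] spec_norm_le_norm[of "A s"] by linarith
      ultimately show "norm (lrdist r (A s)) \<le> norm (real CARD('n) * real CARD('n) * norm (A s))"
        by simp
    qed
  qed
  have lam_int: "integrable ?M (\<lambda>s. \<bar>lam s r\<bar>)"
    using lr_int by (subst Bochner_Integration.integrable_cong[OF refl lam_eq]) auto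
  have pw: "norm (((trunc_spec r (lam s) (U s) + \<gamma> *\<^sub>R mat 1) - (HF wk + \<gamma> *\<^sub>R mat 1)) *v ?v)
      \<le> \<bar>lam s r\<bar> * norm ?v + norm ((A s - H) *v ?v)" if s: "s \<in> space ?M" for s
  proof -
    have "((trunc_spec r (lam s) (U s) + \<gamma> *\<^sub>R mat 1) - (HF wk + \<gamma> *\<^sub>R mat 1)) *v ?v
        = (trunc_spec r (lam s) (U s) - A s) *v ?v + (A s - H) *v ?v"
      unfolding H_def by (simp add: matrix_vector_mult_diff_rdistrib matrix_vector_mult_add_rdistrib)
    also have "norm \<dots> \<le> norm ((trunc_spec r (lam s) (U s) - A s) *v ?v) + norm ((A s - H) *v ?v)"
      by (rule norm_triangle_ineq)
    also have "\<dots> \<le> \<bar>lam s r\<bar> * norm ?v + norm ((A s - H) *v ?v)"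
      using trunc_err[OF eig[OF s, folded A_def] r_lt] by simp
    finally show ?thesis .
  qed
  have rhs_nonneg: "0 \<le> ((\<integral>s. \<bar>lam s r\<bar> \<partial>?M) + \<gamma> + \<sigma> / sqrt (real N)) * norm ?v"
    using gamma_pos sigma_nonneg
    by (intro mult_nonneg_nonneg add_nonneg_nonneg Bochner_Integration.integral_nonneg) auto
  show ?thesis
  proof (cases "integrable ?M (\<lambda>s. norm (((trunc_spec r (lam s) (U s) + \<gamma> *\<^sub>R mat 1) - (HF wk + \<gamma> *\<^sub>R mat 1)) *v ?v))")
    case True
    have "(\<integral>s. norm (((trunc_spec r (lam s) (U s) + \<gamma> *\<^sub>R mat 1) - (HF wk + \<gamma> *\<^sub>R mat 1)) *v ?v) \<partial>?M)
        \<le> (\<integral>s. \<bar>lam s r\<bar> * norm ?v + norm ((A s - H) *v ?v) \<partial>?M)"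
      by (rule integral_mono[OF True]) (use lam_int second_int pw in auto)
    also have "\<dots> = (\<integral>s. \<bar>lam s r\<bar> \<partial>?M) * norm ?v + (\<integral>s. norm ((A s - H) *v ?v) \<partial>?M)"
      using lam_int second_int by simp
    also have "\<dots> \<le> (\<integral>s. \<bar>lam s r\<bar> \<partial>?M) * norm ?v + \<sigma> / sqrt (real N) * norm ?v"
      using second by simp
    also have "\<dots> \<le> ((\<integral>s. \<bar>lam s r\<bar> \<partial>?M) + \<gamma> + \<sigma> / sqrt (real N)) * norm ?v"
      using gamma_pos by (simp add: algebra_simps)
    finally show ?thesis .
  next
    case False
    then show ?thesis using rhs_nonneg by (simp add: not_integrable_integral_eq)
  qed
qed


end
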